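(* Let $n\ge 2$, $R>1$, $a=6R$, and let $u'':[1,a]\to[0,\infty)$ satisfy $u''<R$. Let $f_t(x)$, $x\in[1,a]$, evolve by $$\dot f=u''(x)\left(\frac{f''}{1+f'^2}+(n-1)\frac{xf'-f}{x^2+f^2}\right)$$ with fixed boundary values. Then for $y_0$ sufficiently negative the following holds: if the graph of $f_0$ does not intersect the ball $B_R(3R,y_0)$, then the family of shrinking balls $B_{\sqrt{R^2-4Rt}}(3R,y_0)$ does not intersect the graphs of $f_t$, as long as the flow is defined (and $t<R/4$).
   Context: Here $u''$ is the second $\rho$-derivative of the potential $u(\rho)$ of a Calabi-symmetric K\"ahler form $\omega=i\partial\bar\partial u$ on the blowup of $\mathbb{P}^n$ at a point in the class $a[H]-[E]$, regarded as a function of the Legendre coordinate $x=u'(\rho)\in[1,a]$. *)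

theory Defs
  imports "HOL-Analysis.Analysis"
begin

definition flow_solution ::
  "nat \<Rightarrow> real \<Rightarrow> (real \<Rightarrow> real) \<Rightarrow> real \<Rightarrow> (real \<Rightarrow> real \<Rightarrow> real) \<Rightarrow> bool" where
  "flow_solution n a u2 T f \<longleftrightarrow>
     continuous_on ({0..<T} \<times> {1..a}) (\<lambda>(t, x). f t x) \<and>
     (\<forall>t\<in>{0..<T}. f t 1 = f 0 1 \<and> f t a = f 0 a) \<and>
     (\<exists>f1 f2 ft :: real \<Rightarrow> real \<Rightarrow> real.
        continuous_on ({0<..<T} \<times> {1<..<a}) (\<lambda>(t, x). f1 t x) \<and>
        continuous_on ({0<..<T} \<times> {1<..<a}) (\<lambda>(t, x). f2 t x) \<and>
        continuous_on ({0<..<T} \<times> {1<..<a}) (\<lambda>(t, x). ft t x) \<and>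
        (\<forall>t\<in>{0<..<T}. \<forall>x\<in>{1<..<a}.
           ((\<lambda>y. f t y) has_real_derivative f1 t x) (at x) \<and>
           ((\<lambda>y. f1 t y) has_real_derivative f2 t x) (at x) \<and>
           ((\<lambda>s. f s x) has_real_derivative ft t x) (at t) \<and>
           ft t x = u2 x * (f2 t x / (1 + (f1 t x)\<^sup>2)
                     + real (n - 1) * (x * f1 t x - f t x) / (x\<^sup>2 + (f t x)\<^sup>2))))"

end

theory Submission
  imports Defs
begin
lemma sq_le:
  fixes a b R :: real
  assumes "a^2 + b^2 \<le> R^2" "R > 0"
  shows "\<bar>a\<bar> \<le> R" "\<bar>b\<bar> \<le> R"
proof -
  have "a^2 \<le> R^2" "b^2 \<le> R^2" using assms(1) zero_le_power2[of a] zero_le_power2[of b] by linarith+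
  then have "\<bar>a\<bar> \<le> \<bar>R\<bar>" "\<bar>b\<bar> \<le> \<bar>R\<bar>" by (simp_all add: abs_le_square_iff)
  then show "\<bar>a\<bar> \<le> R" "\<bar>b\<bar> \<le> R" using assms(2) by simp_all
qed

lemma aux_sq:
  fixes x a :: real
  shows "(x + a) * a / 2 \<le> x^2 + a^2"
proof -
  have e: "x^2 + a^2 - (x + a) * a / 2 = (x - a/4)^2 + 7/16 * a^2"
    by (simp add: power2_eq_square field_simps)
  have "0 \<le> (x - a/4)^2 + 7/16 * a^2" by simp
  then show ?thesis using e by linarith
qed

lemma arith_core:
  fixes u R x f y0 f1 f2 ft :: real and n :: nat
  assumes u0: "0 \<le> u" and uR: "u < R" and R1: "R > 1" and n2: "n \<ge> 2" and x1: "x \<ge> 1"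
    and e1: "(x - 3*R) + (f - y0) * f1 = 0"
    and e2: "1 + f1^2 + (f - y0) * f2 \<ge> 0"
    and e3: "(x - 3*R)^2 + (f - y0)^2 \<le> R^2"
    and fb: "f \<le> - (2*real n - 1) * R"
    and eft: "ft = u * (f2 / (1 + f1^2) + real (n - 1) * (x * f1 - f) / (x^2 + f^2))"
  shows "(f - y0) * ft > - 2 * R"
proof -
  define w where "w = f - y0"
  have p: "1 + f1^2 > 0" by (simp add: add_pos_nonneg)
  have A: "w * (f2 / (1 + f1^2)) \<ge> -1"
    using e2 p by (simp add: w_def field_simps)
  have ax: "\<bar>x - 3*R\<bar> \<le> R" and aw: "\<bar>w\<bar> \<le> R"
    using sq_le[OF e3] R1 unfolding w_def by auto
  have eq: "w * (x * f1 - f) = - x * (x - 3*R) - w * f"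
    using e1 unfolding w_def by algebra
  have B1: "\<bar>x * (x - 3*R)\<bar> \<le> x * R" using ax x1 by (simp add: abs_mult mult_left_mono)
  have B2: "\<bar>w * f\<bar> \<le> R * \<bar>f\<bar>" using aw by (simp add: abs_mult mult_right_mono)
  have B: "\<bar>w * (x * f1 - f)\<bar> \<le> R * (x + \<bar>f\<bar>)"
  proof -
    have "w * (x * f1 - f) = - (x * (x - 3*R) + w * f)" using eq by simp
    then have "\<bar>w * (x * f1 - f)\<bar> = \<bar>x * (x - 3*R) + w * f\<bar>" by (simp only: abs_minus_cancel)
    also have "\<dots> \<le> \<bar>x * (x - 3*R)\<bar> + \<bar>w * f\<bar>" by (rule abs_triangle_ineq)
    also have "\<dots> \<le> x * R + R * \<bar>f\<bar>" using B1 B2 by linarith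
    also have "\<dots> = R * (x + \<bar>f\<bar>)" by (simp add: algebra_simps)
    finally show ?thesis .
  qed
  have fa: "\<bar>f\<bar> \<ge> 2 * (real n - 1) * R" using fb R1 by (simp add: algebra_simps)
  have C1: "(real n - 1) * R * (x + \<bar>f\<bar>) \<le> (x + \<bar>f\<bar>) * \<bar>f\<bar> / 2"
  proof -
    have "2 * ((real n - 1) * R) \<le> \<bar>f\<bar>" using fa by (metis mult.assoc)
    then have "(real n - 1) * R \<le> \<bar>f\<bar> / 2" by linarith
    moreover have "x + \<bar>f\<bar> \<ge> 0" using x1 by simp
    ultimately have "(real n - 1) * R * (x + \<bar>f\<bar>) \<le> \<bar>f\<bar> / 2 * (x + \<bar>f\<bar>)"
      by (rule mult_right_mono)
    then show ?thesis by (simp add: algebra_simps)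
  qed
  have C2: "(x + \<bar>f\<bar>) * \<bar>f\<bar> / 2 \<le> x^2 + f^2"
    using aux_sq[of x "\<bar>f\<bar>"] by simp
  have xf: "x^2 + f^2 > 0" using x1 by (simp add: add_pos_nonneg)
  have nn: "real (n - 1) = real n - 1" using n2 by simp
  have D: "w * (real (n - 1) * (x * f1 - f) / (x^2 + f^2)) \<ge> -1"
  proof -
    have "real (n - 1) * \<bar>w * (x * f1 - f)\<bar> \<le> (real n - 1) * (R * (x + \<bar>f\<bar>))"
      using B n2 nn by (simp add: mult_left_mono)
    also have "\<dots> \<le> x^2 + f^2" using C1 C2 by (simp add: algebra_simps)
    finally have D0: "real (n - 1) * \<bar>w * (x * f1 - f)\<bar> \<le> x^2 + f^2" .
    have "- (w * (x * f1 - f)) \<le> \<bar>w * (x * f1 - f)\<bar>" by simp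
    then have "real (n - 1) * (- (w * (x * f1 - f))) \<le> real (n - 1) * \<bar>w * (x * f1 - f)\<bar>"
      by (rule mult_left_mono) simp
    then have "- (real (n - 1) * (w * (x * f1 - f))) \<le> x^2 + f^2" using D0 by simp
    then show ?thesis using xf by (simp add: field_simps)
  qed
  have "w * ft = u * (w * (f2 / (1 + f1^2)) + w * (real (n - 1) * (x * f1 - f) / (x^2 + f^2)))"
    unfolding eft by (simp add: algebra_simps)
  also have "\<dots> \<ge> u * (-2)" using A D u0 by (intro mult_left_mono) auto
  finally show ?thesis using uR unfolding w_def by linarith
qed

lemma core:
  fixes n :: nat and R y0 eps T :: real and u2 :: "real \<Rightarrow> real"
    and f f1 f2 ft :: "real \<Rightarrow> real \<Rightarrow> real"
  assumes n2: "n \<ge> 2" and R1: "R > 1"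
    and ub: "\<forall>x\<in>{1..6*R}. 0 \<le> u2 x \<and> u2 x < R"
    and y0b: "y0 \<le> - 2 * real n * R" and e0: "eps > 0"
    and cont: "continuous_on ({0..<T} \<times> {1..6*R}) (\<lambda>(t, x). f t x)"
    and bnd: "\<forall>t\<in>{0..<T}. f t 1 = f 0 1 \<and> f t (6*R) = f 0 (6*R)"
    and der: "\<forall>t\<in>{0<..<T}. \<forall>x\<in>{1<..<6*R}.
           ((\<lambda>y. f t y) has_real_derivative f1 t x) (at x) \<and>
           ((\<lambda>y. f1 t y) has_real_derivative f2 t x) (at x) \<and>
           ((\<lambda>s. f s x) has_real_derivative ft t x) (at t) \<and>
           ft t x = u2 x * (f2 t x / (1 + (f1 t x)\<^sup>2)
                     + real (n - 1) * (x * f1 t x - f t x) / (x\<^sup>2 + (f t x)\<^sup>2))"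
    and init: "\<forall>x\<in>{1..6*R}. (x - 3*R)^2 + (f 0 x - y0)^2 \<ge> R^2"
    and t0: "t \<in> {0..<T}" and x0: "x \<in> {1..6*R}"
  shows "(x - 3*R)^2 + (f t x - y0)^2 - (R^2 - 4*R*t - eps*(1+t)) > 0"
proof (rule ccontr)
  define G where "G r y = (y - 3*R)^2 + (f r y - y0)^2 - (R^2 - 4*R*r - eps*(1+r))" for r y
  assume "\<not> ?thesis"
  then have Gtx: "G t x \<le> 0" unfolding G_def by simp
  define K where "K = {0..t} \<times> {1..6*R}"
  define S where "S = K \<inter> (\<lambda>p. G (fst p) (snd p)) -` {..0}"
  have Ksub: "K \<subseteq> {0..<T} \<times> {1..6*R}" using t0 unfolding K_def by auto
  have contG: "continuous_on K (\<lambda>p. G (fst p) (snd p))"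
  proof -
    have c1: "continuous_on K (\<lambda>p. (\<lambda>(t, x). f t x) p)"
      using continuous_on_subset[OF cont Ksub] .
    have c2: "continuous_on K (\<lambda>p. f (fst p) (snd p))"
      using c1 by (simp add: case_prod_beta)
    show ?thesis unfolding G_def by (intro continuous_intros c2)
  qed
  have "closed S" unfolding S_def
    by (rule continuous_closed_preimage[OF contG]) (auto simp: K_def closed_Times)
  then have cS: "compact S" unfolding S_def
    using compact_Int_closed[of K] by (metis K_def S_def compact_Icc compact_Times inf.absorb_iff2 inf_le1 closed_Int_compact)
  have "(t, x) \<in> S" using Gtx t0 x0 unfolding S_def K_def by auto
  then have neS: "fst ` S \<noteq> {}" by auto
  obtain ts where tsS: "ts \<in> fst ` S" and tsmin: "\<forall>s\<in>fst ` S. ts \<le> s"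
    using compact_attains_inf[OF compact_continuous_image[OF continuous_on_fst[OF continuous_on_id] cS] neS]
    by auto
  obtain xs where xsS: "(ts, xs) \<in> S" using tsS by auto
  have ts_t: "0 \<le> ts" "ts \<le> t" and xs1: "xs \<in> {1..6*R}" and Gs: "G ts xs \<le> 0"
    using xsS unfolding S_def K_def by auto
  have tsT: "ts < T" using ts_t t0 by auto
  have G0pos: "G 0 y \<ge> eps" if "y \<in> {1..6*R}" for y
  proof -
    have "R^2 \<le> (y - 3*R)^2 + (f 0 y - y0)^2" using init that by blast
    then show ?thesis unfolding G_def by simp
  qed
  have ts0: "ts > 0"
  proof (rule ccontr)
    assume "\<not> ts > 0" then have "ts = 0" using ts_t by simp
    then show False using G0pos[OF xs1] Gs e0 by simp
  qed
  have below: "G s y > 0" if "0 \<le> s" "s < ts" "y \<in> {1..6*R}" for s y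
  proof (rule ccontr)
    assume "\<not> G s y > 0"
    then have "(s, y) \<in> S" using that ts_t unfolding S_def K_def by auto
    then have "s \<in> fst ` S" by (metis fst_conv image_eqI)
    then have "ts \<le> s" using tsmin by blast
    then show False using that(2) by linarith
  qed
  have e3: "(xs - 3*R)^2 + (f ts xs - y0)^2 \<le> R^2"
  proof -
    have "0 \<le> 4*R*ts + eps*(1+ts)" using ts_t R1 e0 by simp
    then show ?thesis using Gs unfolding G_def by linarith
  qed
  have axs: "\<bar>xs - 3*R\<bar> \<le> R" and afs: "\<bar>f ts xs - y0\<bar> \<le> R"
    using sq_le[OF e3] R1 by auto
  have xsI: "xs \<in> {1<..<6*R}" using axs R1 by auto
  have tsI: "ts \<in> {0<..<T}" using ts0 tsT by auto
  note dx = der[rule_format, THEN conjunct1]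
  note dxx = der[rule_format, THEN conjunct2, THEN conjunct1]
  note dtt = der[rule_format, THEN conjunct2, THEN conjunct2, THEN conjunct1]
  note deq = der[rule_format, THEN conjunct2, THEN conjunct2, THEN conjunct2]
  have Gnn: "G ts y \<ge> 0" if y: "y \<in> {1..6*R}" for y
  proof (cases "y = 1 \<or> y = 6*R")
    case True
    then have "f ts y = f 0 y" using bnd[rule_format, of ts] ts_t tsT by auto
    then have "G ts y = G 0 y + 4*R*ts + eps*ts" unfolding G_def by (simp add: algebra_simps)
    moreover have "4*R*ts + eps*ts \<ge> 0" using ts_t R1 e0 by simp
    ultimately show ?thesis using G0pos[OF y] e0 by linarith
  next
    case False
    then have yI: "y \<in> {1<..<6*R}" using y by auto
    have "((\<lambda>s. f s y) has_real_derivative ft ts y) (at ts)" using dtt[OF tsI yI] .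
    then have "isCont (\<lambda>s. f s y) ts" by (rule DERIV_isCont)
    then have "isCont (\<lambda>s. G s y) ts" unfolding G_def by (intro continuous_intros)
    then have "((\<lambda>s. G s y) \<longlongrightarrow> G ts y) (at ts)" by (simp add: isCont_def)
    then have lim: "((\<lambda>s. G s y) \<longlongrightarrow> G ts y) (at_left ts)" by (simp add: filterlim_at_split)
    have ev: "eventually (\<lambda>s. 0 \<le> G s y) (at_left ts)"
      proof (rule eventually_mono[OF eventually_at_left_real[OF ts0]])
      fix s assume "s \<in> {0<..<ts}"
      then have "0 \<le> s" "s < ts" by auto
      then show "0 \<le> G s y" using below[of s y] y by linarith
    qed
    show ?thesis by (rule tendsto_lowerbound[OF lim ev trivial_limit_at_left_real])
  qed
  have Gz: "G ts xs = 0" using Gs Gnn[OF xs1] by simp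
  define w where "w = f ts xs - y0"
  note d1 = dx[OF tsI xsI] and d2 = dxx[OF tsI xsI] and d3 = dtt[OF tsI xsI] and eft = deq[OF tsI xsI]
  define g' where "g' y = 2*(y - 3*R) + 2*(f ts y - y0)*f1 ts y" for y
  have dg: "((\<lambda>y. G ts y) has_real_derivative g' y) (at y)" if "y \<in> {1<..<6*R}" for y
  proof -
    have "((\<lambda>y. f ts y) has_real_derivative f1 ts y) (at y)" using dx[OF tsI that] .
    then show ?thesis unfolding G_def g'_def
      by (auto intro!: derivative_eq_intros simp: algebra_simps)
  qed
  have g'0: "g' xs = 0"
  proof (rule DERIV_local_min[OF dg[OF xsI]])
    show "0 < min (xs - 1) (6*R - xs)" using xsI by auto
    show "\<forall>y. \<bar>xs - y\<bar> < min (xs - 1) (6 * R - xs) \<longrightarrow> G ts xs \<le> G ts y"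
    proof (intro allI impI)
      fix y assume "\<bar>xs - y\<bar> < min (xs - 1) (6 * R - xs)"
      then have "y \<in> {1..6*R}" by auto
      then show "G ts xs \<le> G ts y" using Gz Gnn[of y] by simp
    qed
  qed
  have dg': "(g' has_real_derivative 2 + 2*(f1 ts xs)^2 + 2*w*f2 ts xs) (at xs)"
    unfolding g'_def w_def using d1 d2
    by (auto intro!: derivative_eq_intros simp: algebra_simps power2_eq_square)
  have sec: "1 + (f1 ts xs)^2 + w * f2 ts xs \<ge> 0"
  proof (rule ccontr)
    assume "\<not> ?thesis"
    then have "2 + 2*(f1 ts xs)^2 + 2*w*f2 ts xs < 0" by simp
    from DERIV_neg_dec_right[OF dg' this] obtain d where d: "d > 0"
      and dd: "\<And>h. h > 0 \<Longrightarrow> h < d \<Longrightarrow> g' xs > g' (xs + h)" by blast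
    define m where "m = min d (6*R - xs)"
    define h where "h = m / 2"
    have mm: "m \<le> 6*R - xs" "m \<le> d" "m > 0"
      using d xsI unfolding m_def by auto
    have h0a: "h > 0" using mm(3) unfolding h_def by simp
    have h0b: "h < d" using mm(2,3) unfolding h_def by linarith
    have h0c: "xs + h < 6*R" using mm(1,3) unfolding h_def by linarith
    note h0 = h0a h0b h0c
    have mvd: "((\<lambda>y. G ts y) has_real_derivative g' z) (at z)" if "xs \<le> z" "z \<le> xs + h" for z
      using dg[of z] xsI h0 that by auto
    from MVT2[of xs "xs + h" "G ts" g', OF _ mvd] h0 obtain z where z: "z > xs" "z < xs + h"
      and mv: "G ts (xs + h) - G ts xs = (xs + h - xs) * g' z" by auto
    have "g' z < 0" using dd[of "z - xs"] z h0 g'0 by auto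
    then have "h * g' z < 0" using h0 by (simp add: mult_pos_neg)
    then have "G ts (xs + h) < G ts xs" using mv by simp
    moreover have "G ts (xs + h) \<ge> 0" using Gnn[of "xs+h"] xsI h0 by auto
    ultimately show False using Gz by simp
  qed
  have dt: "((\<lambda>s. G s xs) has_real_derivative 2*w*ft ts xs + 4*R + eps) (at ts)"
    unfolding G_def w_def using d3
    by (auto intro!: derivative_eq_intros simp: algebra_simps)
  have tneg: "2*w*ft ts xs + 4*R + eps \<le> 0"
  proof (rule ccontr)
    assume "\<not> ?thesis"
    then have "2*w*ft ts xs + 4*R + eps > 0" by simp
    from DERIV_pos_inc_left[OF dt this] obtain d where d: "d > 0"
      and dd: "\<And>h. h > 0 \<Longrightarrow> h < d \<Longrightarrow> G (ts - h) xs < G ts xs" by blast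
    define h where "h = min d ts / 2"
    have h0: "h > 0" "h < d" "h < ts" using d ts0 unfolding h_def by auto
    have "G (ts - h) xs > 0" using below[of "ts - h" xs] h0 xs1 by auto
    then show False using dd[OF h0(1,2)] Gz by simp
  qed
  have ub': "0 \<le> u2 xs" "u2 xs < R" using ub xs1 by auto
  have fb: "f ts xs \<le> - (2*real n - 1) * R" using afs y0b by (simp add: algebra_simps abs_le_iff)
  have "2 * ((xs - 3*R) + w * f1 ts xs) = 0" using g'0 unfolding g'_def w_def by (simp add: algebra_simps)
  then have e1: "(xs - 3*R) + (f ts xs - y0) * f1 ts xs = 0" unfolding w_def by simp
  have e2: "1 + (f1 ts xs)^2 + (f ts xs - y0) * f2 ts xs \<ge> 0" using sec unfolding w_def .
  have x1: "xs \<ge> 1" using xs1 by simp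
  have "w * ft ts xs > - 2 * R"
    unfolding w_def by (rule arith_core[OF ub' R1 n2 x1 e1 e2 e3 fb eft])
  then show False using tneg e0 by linarith
qed

lemma lin_contra:
  fixes E A q :: real
  shows "E = (A - q) / 2 \<Longrightarrow> 0 < q - (A - E) \<Longrightarrow> q < A \<Longrightarrow> False"
  by (simp add: field_simps)

lemma dist_sq:
  fixes a b c d :: real
  shows "dist (a, b) (c, d) = sqrt ((c - a)^2 + (d - b)^2)"
proof -
  have 1: "(dist a c)^2 = (c - a)^2" unfolding dist_real_def power2_abs by (rule power2_commute)
  have 2: "(dist b d)^2 = (d - b)^2" unfolding dist_real_def power2_abs by (rule power2_commute)
  show ?thesis by (simp only: dist_Pair_Pair 1 2)
qed

theorem proposition3p4:
  fixes n :: nat and R :: real and u2 :: "real \<Rightarrow> real"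
  assumes "n \<ge> 2" and "R > 1"
    and "continuous_on {1..6*R} u2"
    and "\<forall>x\<in>{1..6*R}. 0 \<le> u2 x \<and> u2 x < R"
  shows "\<exists>Y. \<forall>y0 \<le> Y. \<forall>(f :: real \<Rightarrow> real \<Rightarrow> real) T.
           flow_solution n (6*R) u2 T f \<longrightarrow>
           (\<forall>x\<in>{1..6*R}. (x, f 0 x) \<notin> ball (3*R, y0) R) \<longrightarrow>
           (\<forall>t\<in>{0..<T}. t < R / 4 \<longrightarrow>
              (\<forall>x\<in>{1..6*R}. (x, f t x) \<notin> ball (3*R, y0) (sqrt (R\<^sup>2 - 4*R*t))))"
proof (intro exI[of _ "- 2 * real n * R"] allI impI ballI)
  fix y0 :: real and f :: "real \<Rightarrow> real \<Rightarrow> real" and T t x :: real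
  assume y0b: "y0 \<le> - 2 * real n * R" and fs: "flow_solution n (6*R) u2 T f"
    and i0: "\<forall>x\<in>{1..6*R}. (x, f 0 x) \<notin> ball (3*R, y0) R"
    and t0: "t \<in> {0..<T}" and tR: "t < R / 4" and x0: "x \<in> {1..6*R}"
  have cont: "continuous_on ({0..<T} \<times> {1..6*R}) (\<lambda>(t, x). f t x)"
    using fs[unfolded flow_solution_def, THEN conjunct1] .
  have bnd: "\<forall>t\<in>{0..<T}. f t 1 = f 0 1 \<and> f t (6*R) = f 0 (6*R)"
    using fs[unfolded flow_solution_def, THEN conjunct2, THEN conjunct1] .
  have ex: "\<exists>f1 f2 ft :: real \<Rightarrow> real \<Rightarrow> real. continuous_on ({0<..<T} \<times> {1<..<6*R}) (\<lambda>(t, x). f1 t x) \<and>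
        continuous_on ({0<..<T} \<times> {1<..<6*R}) (\<lambda>(t, x). f2 t x) \<and>
        continuous_on ({0<..<T} \<times> {1<..<6*R}) (\<lambda>(t, x). ft t x) \<and>
        (\<forall>t\<in>{0<..<T}. \<forall>x\<in>{1<..<6*R}.
           ((\<lambda>y. f t y) has_real_derivative f1 t x) (at x) \<and>
           ((\<lambda>y. f1 t y) has_real_derivative f2 t x) (at x) \<and>
           ((\<lambda>s. f s x) has_real_derivative ft t x) (at t) \<and>
           ft t x = u2 x * (f2 t x / (1 + (f1 t x)\<^sup>2)
                     + real (n - 1) * (x * f1 t x - f t x) / (x\<^sup>2 + (f t x)\<^sup>2)))"
    using fs unfolding flow_solution_def by (rule conjunct2[THEN conjunct2])
  then obtain f1 f2 ft :: "real \<Rightarrow> real \<Rightarrow> real" where H: "continuous_on ({0<..<T} \<times> {1<..<6*R}) (\<lambda>(t, x). f1 t x) \<and>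
        continuous_on ({0<..<T} \<times> {1<..<6*R}) (\<lambda>(t, x). f2 t x) \<and>
        continuous_on ({0<..<T} \<times> {1<..<6*R}) (\<lambda>(t, x). ft t x) \<and>
        (\<forall>t\<in>{0<..<T}. \<forall>x\<in>{1<..<6*R}.
           ((\<lambda>y. f t y) has_real_derivative f1 t x) (at x) \<and>
           ((\<lambda>y. f1 t y) has_real_derivative f2 t x) (at x) \<and>
           ((\<lambda>s. f s x) has_real_derivative ft t x) (at t) \<and>
           ft t x = u2 x * (f2 t x / (1 + (f1 t x)\<^sup>2)
                     + real (n - 1) * (x * f1 t x - f t x) / (x\<^sup>2 + (f t x)\<^sup>2)))"
    by (elim exE) (rule that)
  note der = H[THEN conjunct2, THEN conjunct2, THEN conjunct2]
  have init: "\<forall>x\<in>{1..6*R}. (x - 3*R)^2 + (f 0 x - y0)^2 \<ge> R^2"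
  proof
    fix z assume z: "z \<in> {1..6*R}"
    have "(z, f 0 z) \<notin> ball (3*R, y0) R" using i0 z by blast
    then have "\<not> dist (3*R, y0) (z, f 0 z) < R" unfolding mem_ball .
    then have "R \<le> sqrt ((z - 3*R)^2 + (f 0 z - y0)^2)" unfolding dist_sq not_less .
    then have "R^2 \<le> (sqrt ((z - 3*R)^2 + (f 0 z - y0)^2))^2"
      using assms(2) by (intro power_mono) auto
    then show "(z - 3*R)^2 + (f 0 z - y0)^2 \<ge> R^2" by simp
  qed
  define q where "q = (x - 3*R)^2 + (f t x - y0)^2"
  have qge: "q \<ge> R^2 - 4*R*t"
  proof (rule ccontr)
    assume "\<not> ?thesis"
    then have qlt: "q < R^2 - 4*R*t" by simp
    have t0': "t \<ge> 0" using t0 by simp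
    define c where "c = 1 + t"
    have c0: "c > 0" using t0' unfolding c_def by simp
    define eps where "eps = (R^2 - 4*R*t - q) / (2*c)"
    have ep: "eps > 0" using qlt c0 unfolding eps_def by simp
    have "eps * c = (R^2 - 4*R*t - q) / 2" unfolding eps_def using c0 by (simp add: field_simps)
    then have "eps * (1+t) = (R^2 - 4*R*t - q) / 2" unfolding c_def .
    moreover have "q - (R^2 - 4*R*t - eps*(1+t)) > 0"
      using core[OF assms(1,2,4) y0b ep cont bnd der init t0 x0] unfolding q_def .
    ultimately show False using qlt lin_contra by blast
  qed
  have "sqrt (R^2 - 4*R*t) \<le> sqrt q" using qge by (rule real_sqrt_le_mono)
  then show "(x, f t x) \<notin> ball (3*R, y0) (sqrt (R\<^sup>2 - 4*R*t))"
    unfolding mem_ball dist_sq q_def not_less .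
qed

end
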